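(* Let $A$ be a commutative noetherian local ring, let $x,y\in A$ be a regular exact pair of zero divisors, and let $a\in A$ be weakly regular on the $A$-module $A/(x,y)$. Then there are isomorphisms of $A$-algebras $\operatorname{End}_A(G_a)\cong A\cong \operatorname{End}_A(H_a)$. In particular, $\operatorname{End}_A(G_a)$ and $\operatorname{End}_A(H_a)$ are commutative noetherian local rings, and the $A$-modules $G_a$ and $H_a$ are indecomposable.
   Context: Two non-units $x,y\in A$ form an exact pair of zero divisors if $\operatorname{Ann}_A(x)=(y)$ and $\operatorname{Ann}_A(y)=(x)$; such a pair is regular if $(x)\cap(y)=0$. An element $a\in A$ is weakly regular on a module $M$ if multiplication by $a$ on $M$ is injective. For $a\in A$, let $\gamma_a=\begin{pmatrix} x & a\\ 0 & y\end{pmatrix}$ and $\eta_a=\begin{pmatrix} y & -a\\ 0 & x\end{pmatrix}$, viewed as $A$-linear maps $A^2\to A^2$ acting on column vectors, and set $G_a=\operatorname{Coker}\gamma_a$, $H_a=\operatorname{Coker}\eta_a$. *)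

theory Defs
  imports Main
begin

definition is_ideal :: "'a::comm_ring_1 set \<Rightarrow> bool" where
  "is_ideal I \<longleftrightarrow> 0 \<in> I \<and> (\<forall>u\<in>I. \<forall>v\<in>I. u + v \<in> I) \<and> (\<forall>r. \<forall>u\<in>I. r * u \<in> I)"

definition ideal_gen :: "'a::comm_ring_1 set \<Rightarrow> 'a set" where
  "ideal_gen F = {(\<Sum>f\<in>F. c f * f) | c. True}"

definition noetherian_ring :: "'a::comm_ring_1 itself \<Rightarrow> bool" where
  "noetherian_ring _ \<longleftrightarrow>
     (\<forall>I::'a set. is_ideal I \<longrightarrow> (\<exists>F. finite F \<and> I = ideal_gen F))"

definition maximal_ideal :: "'a::comm_ring_1 set \<Rightarrow> bool" where
  "maximal_ideal m \<longleftrightarrow> is_ideal m \<and> m \<noteq> UNIV \<and>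
     (\<forall>J. is_ideal J \<and> m \<subseteq> J \<longrightarrow> J = m \<or> J = UNIV)"

definition local_ring :: "'a::comm_ring_1 itself \<Rightarrow> bool" where
  "local_ring _ \<longleftrightarrow> (\<exists>!m::'a set. maximal_ideal m)"

definition pideal :: "'a::comm_ring_1 \<Rightarrow> 'a set" where
  "pideal x = {x * r | r. True}"

definition ann :: "'a::comm_ring_1 \<Rightarrow> 'a set" where
  "ann x = {z. x * z = 0}"

definition exact_pair :: "'a::comm_ring_1 \<Rightarrow> 'a \<Rightarrow> bool" where
  "exact_pair x y \<longleftrightarrow> \<not> x dvd 1 \<and> \<not> y dvd 1 \<and> ann x = pideal y \<and> ann y = pideal x"

definition regular_exact_pair :: "'a::comm_ring_1 \<Rightarrow> 'a \<Rightarrow> bool" where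
  "regular_exact_pair x y \<longleftrightarrow> exact_pair x y \<and> pideal x \<inter> pideal y = {0}"

definition ideal2 :: "'a::comm_ring_1 \<Rightarrow> 'a \<Rightarrow> 'a set" where
  "ideal2 x y = {x * s + y * t | s t. True}"

definition weakly_regular_quot :: "'a::comm_ring_1 \<Rightarrow> 'a set \<Rightarrow> bool" where
  "weakly_regular_quot a I \<longleftrightarrow> (\<forall>b. a * b \<in> I \<longrightarrow> b \<in> I)"

definition vadd :: "'a::comm_ring_1 \<times> 'a \<Rightarrow> 'a \<times> 'a \<Rightarrow> 'a \<times> 'a" where
  "vadd v w = (fst v + fst w, snd v + snd w)"

definition vsmul :: "'a::comm_ring_1 \<Rightarrow> 'a \<times> 'a \<Rightarrow> 'a \<times> 'a" where
  "vsmul r v = (r * fst v, r * snd v)"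

text \<open>gamma_a = [[x, a],[0, y]] and eta_a = [[y, -a],[0, x]] acting on column vectors (s,t).\<close>
definition gamma :: "'a::comm_ring_1 \<Rightarrow> 'a \<Rightarrow> 'a \<Rightarrow> 'a \<times> 'a \<Rightarrow> 'a \<times> 'a" where
  "gamma x y a v = (x * fst v + a * snd v, y * snd v)"

definition eta :: "'a::comm_ring_1 \<Rightarrow> 'a \<Rightarrow> 'a \<Rightarrow> 'a \<times> 'a \<Rightarrow> 'a \<times> 'a" where
  "eta x y a v = (y * fst v - a * snd v, x * snd v)"

text \<open>Cokernel of f: A^2 \<rightarrow> A^2 is A^2/N with N = image of f; elements are cosets.\<close>
definition coset :: "('a::comm_ring_1 \<times> 'a) set \<Rightarrow> 'a \<times> 'a \<Rightarrow> ('a \<times> 'a) set" where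
  "coset N v = {vadd v n | n. n \<in> N}"

definition qcarrier :: "('a::comm_ring_1 \<times> 'a) set \<Rightarrow> ('a \<times> 'a) set set" where
  "qcarrier N = range (coset N)"

definition qadd :: "('a::comm_ring_1 \<times> 'a) set \<Rightarrow> ('a \<times> 'a) set \<Rightarrow> ('a \<times> 'a) set" where
  "qadd P R = {vadd p r | p r. p \<in> P \<and> r \<in> R}"

definition qsmul :: "('a::comm_ring_1 \<times> 'a) set \<Rightarrow> 'a \<Rightarrow> ('a \<times> 'a) set \<Rightarrow> ('a \<times> 'a) set" where
  "qsmul N r P = {vadd (vsmul r p) n | p n. p \<in> P \<and> n \<in> N}"

text \<open>End_A(A^2/N): A-linear self-maps of the quotient, extensional (undefined off the carrier).\<close>
definition qEnd :: "('a::comm_ring_1 \<times> 'a) set \<Rightarrow> (('a \<times> 'a) set \<Rightarrow> ('a \<times> 'a) set) set" where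
  "qEnd N = {\<phi>. (\<forall>q\<in>qcarrier N. \<phi> q \<in> qcarrier N)
              \<and> (\<forall>q. q \<notin> qcarrier N \<longrightarrow> \<phi> q = undefined)
              \<and> (\<forall>P\<in>qcarrier N. \<forall>R\<in>qcarrier N. \<phi> (qadd P R) = qadd (\<phi> P) (\<phi> R))
              \<and> (\<forall>r. \<forall>P\<in>qcarrier N. \<phi> (qsmul N r P) = qsmul N r (\<phi> P))}"

definition ecomp :: "('a::comm_ring_1 \<times> 'a) set \<Rightarrow> (('a \<times> 'a) set \<Rightarrow> ('a \<times> 'a) set)
     \<Rightarrow> (('a \<times> 'a) set \<Rightarrow> ('a \<times> 'a) set) \<Rightarrow> ('a \<times> 'a) set \<Rightarrow> ('a \<times> 'a) set" where
  "ecomp N \<phi> \<chi> = (\<lambda>q. if q \<in> qcarrier N then \<phi> (\<chi> q) else undefined)"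

definition eadd :: "('a::comm_ring_1 \<times> 'a) set \<Rightarrow> (('a \<times> 'a) set \<Rightarrow> ('a \<times> 'a) set)
     \<Rightarrow> (('a \<times> 'a) set \<Rightarrow> ('a \<times> 'a) set) \<Rightarrow> ('a \<times> 'a) set \<Rightarrow> ('a \<times> 'a) set" where
  "eadd N \<phi> \<chi> = (\<lambda>q. if q \<in> qcarrier N then qadd (\<phi> q) (\<chi> q) else undefined)"

definition eid :: "('a::comm_ring_1 \<times> 'a) set \<Rightarrow> ('a \<times> 'a) set \<Rightarrow> ('a \<times> 'a) set" where
  "eid N = (\<lambda>q. if q \<in> qcarrier N then q else undefined)"

definition esmul :: "('a::comm_ring_1 \<times> 'a) set \<Rightarrow> 'a
     \<Rightarrow> (('a \<times> 'a) set \<Rightarrow> ('a \<times> 'a) set) \<Rightarrow> ('a \<times> 'a) set \<Rightarrow> ('a \<times> 'a) set" where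
  "esmul N r \<phi> = (\<lambda>q. if q \<in> qcarrier N then qsmul N r (\<phi> q) else undefined)"

definition End_iso_base :: "('a::comm_ring_1 \<times> 'a) set \<Rightarrow> bool" where
  "End_iso_base N \<longleftrightarrow> (\<exists>\<psi>. bij_betw \<psi> (qEnd N) (UNIV :: 'a set)
      \<and> (\<forall>\<phi>\<in>qEnd N. \<forall>\<chi>\<in>qEnd N. \<psi> (ecomp N \<phi> \<chi>) = \<psi> \<phi> * \<psi> \<chi>)
      \<and> (\<forall>\<phi>\<in>qEnd N. \<forall>\<chi>\<in>qEnd N. \<psi> (eadd N \<phi> \<chi>) = \<psi> \<phi> + \<psi> \<chi>)
      \<and> \<psi> (eid N) = 1
      \<and> (\<forall>r. \<forall>\<phi>\<in>qEnd N. \<psi> (esmul N r \<phi>) = r * \<psi> \<phi>))"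

definition qsubmod :: "('a::comm_ring_1 \<times> 'a) set \<Rightarrow> ('a \<times> 'a) set set \<Rightarrow> bool" where
  "qsubmod N S \<longleftrightarrow> S \<subseteq> qcarrier N \<and> N \<in> S
     \<and> (\<forall>P\<in>S. \<forall>R\<in>S. qadd P R \<in> S) \<and> (\<forall>r. \<forall>P\<in>S. qsmul N r P \<in> S)"

definition indecomposable_quot :: "('a::comm_ring_1 \<times> 'a) set \<Rightarrow> bool" where
  "indecomposable_quot N \<longleftrightarrow> qcarrier N \<noteq> {N}
     \<and> (\<forall>S T. qsubmod N S \<and> qsubmod N T \<and> S \<inter> T = {N}
            \<and> (\<forall>q\<in>qcarrier N. \<exists>s\<in>S. \<exists>t\<in>T. q = qadd s t)
            \<longrightarrow> S = {N} \<or> T = {N})"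

end

theory Submission
  imports Defs "HOL-Library.Product_Plus"
begin


lemma nonunit_in_max:
  fixes z :: "'a::comm_ring_1"
  assumes "\<not> z dvd 1"
  shows "\<exists>M. maximal_ideal M \<and> z \<in> M"
proof -
  define AA where "AA = {I::'a set. is_ideal I \<and> z \<in> I \<and> 1 \<notin> I}"
  have pz: "pideal z \<in> AA"
    using assms unfolding AA_def is_ideal_def pideal_def
    apply (auto simp: algebra_simps intro: exI[of _ 0] exI[of _ 1])
      apply (metis distrib_right)
     apply (metis mult.assoc)
    by (metis dvdI mult.commute)
  have "\<forall>C\<in>chains AA. \<exists>U\<in>AA. \<forall>X\<in>C. X \<subseteq> U"
  proof
    fix C assume C: "C \<in> chains AA"
    show "\<exists>U\<in>AA. \<forall>X\<in>C. X \<subseteq> U"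
    proof (cases "C = {}")
      case True then show ?thesis using pz by auto
    next
      case False
      have CA: "C \<subseteq> AA" and ch: "\<forall>A\<in>C. \<forall>B\<in>C. A \<subseteq> B \<or> B \<subseteq> A"
        using C by (auto simp: chains_def chain_subset_def)
      have "\<Union>C \<in> AA"
        unfolding AA_def is_ideal_def
      proof (intro CollectI conjI ballI allI)
        show "0 \<in> \<Union>C" using False CA by (auto simp: AA_def is_ideal_def)
        show "z \<in> \<Union>C" using False CA by (auto simp: AA_def)
        show "1 \<notin> \<Union>C" using CA by (auto simp: AA_def)
        fix r u assume "u \<in> \<Union>C" then show "r * u \<in> \<Union>C"
          using CA by (auto simp: AA_def is_ideal_def)
      next
        fix u v assume u: "u \<in> \<Union>C" and v: "v \<in> \<Union>C"
        then obtain U V where U: "U \<in> C" "u \<in> U" and V: "V \<in> C" "v \<in> V" by auto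
        show "u + v \<in> \<Union>C"
        proof (cases "U \<subseteq> V")
          case True
          then have "V \<in> AA" "u \<in> V" using U V CA by auto
          then have "u + v \<in> V" using V by (auto simp: AA_def is_ideal_def)
          then show ?thesis using V by blast
        next
          case False then have "V \<subseteq> U" using ch U V by blast
          then have "U \<in> AA" "v \<in> U" using U V CA by auto
          then have "u + v \<in> U" using U by (auto simp: AA_def is_ideal_def)
          then show ?thesis using U by blast
        qed
      qed
      then show ?thesis by auto
    qed
  qed
  from Zorn_Lemma2[OF this] obtain M where M: "M \<in> AA" and mx: "\<forall>X\<in>AA. M \<subseteq> X \<longrightarrow> X = M" by blast
  have "maximal_ideal M"
    unfolding maximal_ideal_def
  proof (intro conjI allI impI)
    show "is_ideal M" using M by (simp add: AA_def)
    show "M \<noteq> UNIV" using M by (auto simp: AA_def)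
    fix J assume J: "is_ideal J \<and> M \<subseteq> J"
    show "J = M \<or> J = UNIV"
    proof (cases "1 \<in> J")
      case True
      then have "J = UNIV" using J unfolding is_ideal_def by (metis UNIV_eq_I mult.right_neutral)
      then show ?thesis by simp
    next
      case False
      then have "J \<in> AA" using J M by (auto simp: AA_def)
      then show ?thesis using mx J by blast
    qed
  qed
  then show ?thesis using M by (auto simp: AA_def)
qed

lemma local_idem:
  fixes e :: "'a::comm_ring_1"
  assumes "local_ring TYPE('a)" "e * e = e"
  shows "e = 0 \<or> e = 1"
proof -
  obtain m :: "'a set" where m: "maximal_ideal m" and un: "\<And>M. maximal_ideal M \<Longrightarrow> M = m"
    using assms(1) unfolding local_ring_def by blast
  have e0: "e * (1 - e) = 0" using assms(2) by (simp add: algebra_simps)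
  show ?thesis
  proof (cases "e dvd 1")
    case True
    then obtain k where "1 = e * k" by (auto elim: dvdE)
    then have "e = e * e * k" by (simp add: mult.assoc)
    then show ?thesis using assms(2) \<open>1 = e * k\<close> by simp
  next
    case ne: False
    show ?thesis
    proof (cases "(1 - e) dvd 1")
      case True
      then obtain k where "1 = (1 - e) * k" by (auto elim: dvdE)
      then have "e = e * (1 - e) * k" by (simp add: mult.assoc)
      then show ?thesis using e0 by simp
    next
      case False
      obtain M1 where "maximal_ideal M1" "e \<in> M1" using nonunit_in_max[OF ne] by blast
      then have "e \<in> m" using un by blast
      obtain M2 where "maximal_ideal M2" "1 - e \<in> M2" using nonunit_in_max[OF False] by blast
      then have "1 - e \<in> m" using un by blast
      have im: "is_ideal m" "m \<noteq> UNIV" using m by (auto simp: maximal_ideal_def)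
      have "e + (1 - e) \<in> m" using im \<open>e \<in> m\<close> \<open>1 - e \<in> m\<close> unfolding is_ideal_def by blast
      then have "1 \<in> m" by simp
      then have "m = UNIV" using im unfolding is_ideal_def by (metis UNIV_eq_I mult.right_neutral)
      then show ?thesis using im by simp
    qed
  qed
qed


lemma vadd_eq: "vadd v w = v + w" by (simp add: vadd_def plus_prod_def)
lemma vsmul_add: "vsmul c v + vsmul d v = vsmul (c + d) v"
  by (simp add: vsmul_def algebra_simps)
lemma vsmul_add2: "vsmul c (v + w) = vsmul c v + vsmul c w"
  by (simp add: vsmul_def algebra_simps)
lemma vsmul_diff2: "vsmul c (v - w) = vsmul c v - vsmul c w"
  by (simp add: vsmul_def algebra_simps)
lemma vsmul_assoc: "vsmul r (vsmul c v) = vsmul (r * c) v"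
  by (simp add: vsmul_def algebra_simps)
lemma vsmul_one: "vsmul 1 v = v" by (simp add: vsmul_def)
lemma vsmul_zero: "vsmul 0 v = 0" by (simp add: vsmul_def zero_prod_def)

locale gl =
  fixes x y a :: "'a::comm_ring_1"
  assumes annx: "\<And>z. x * z = 0 \<longleftrightarrow> (\<exists>r. z = y * r)"
    and anny: "\<And>z. y * z = 0 \<longleftrightarrow> (\<exists>r. z = x * r)"
    and inter: "\<And>u v. x * u = y * v \<Longrightarrow> x * u = 0"
    and wr: "\<And>b s t. a * b = x * s + y * t \<Longrightarrow> \<exists>\<alpha> \<beta>. b = x * \<alpha> + y * \<beta>"
    and nux: "\<not> x dvd 1"
begin

abbreviation "N \<equiv> range (gamma x y a)"

lemma memN: "v \<in> N \<longleftrightarrow> (\<exists>u w. v = (x * u + a * w, y * w))"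
  by (auto simp: gamma_def image_def)

lemma N0: "0 \<in> N" using memN[of 0] by (auto simp: zero_prod_def intro!: exI[of _ 0])

lemma Nadd: "v \<in> N \<Longrightarrow> w \<in> N \<Longrightarrow> v + w \<in> N"
proof -
  assume "v \<in> N" "w \<in> N"
  then obtain u1 w1 u2 w2 where "v = (x * u1 + a * w1, y * w1)" "w = (x * u2 + a * w2, y * w2)"
    by (auto simp: memN)
  then show ?thesis unfolding memN
    by (intro exI[of _ "u1 + u2"] exI[of _ "w1 + w2"]) (simp add: algebra_simps)
qed

lemma Nsmul: "v \<in> N \<Longrightarrow> vsmul r v \<in> N"
proof -
  assume "v \<in> N"
  then obtain u1 w1 where "v = (x * u1 + a * w1, y * w1)" by (auto simp: memN)
  then show ?thesis unfolding memN
    by (intro exI[of _ "r * u1"] exI[of _ "r * w1"]) (simp add: vsmul_def algebra_simps)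
qed

lemma Nneg: "v \<in> N \<Longrightarrow> - v \<in> N"
proof -
  assume "v \<in> N"
  then have "vsmul (-1) v \<in> N" by (rule Nsmul)
  moreover have "vsmul (-1) v = - v" by (cases v) (simp add: vsmul_def)
  ultimately show ?thesis by simp
qed

lemma Ndiff: "v \<in> N \<Longrightarrow> w \<in> N \<Longrightarrow> v - w \<in> N"
  by (metis Nadd Nneg diff_conv_add_uminus)

lemma coset_alt: "coset N v = {v + n | n. n \<in> N}" by (simp add: coset_def vadd_eq)

lemma coset_eq_iff: "coset N v = coset N w \<longleftrightarrow> v - w \<in> N"
proof
  assume h: "coset N v = coset N w"
  have "v \<in> coset N v" unfolding coset_alt using N0 by (metis (mono_tags) CollectI add.right_neutral)
  then have "v \<in> coset N w" using h by simp
  then obtain n where "n \<in> N" "v = w + n" unfolding coset_alt by blast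
  then show "v - w \<in> N" by simp
next
  assume d: "v - w \<in> N"
  show "coset N v = coset N w"
  proof (rule set_eqI, rule iffI)
    fix z assume "z \<in> coset N v"
    then obtain n where n: "n \<in> N" "z = v + n" unfolding coset_alt by blast
    then have "(v - w) + n \<in> N" using d Nadd by blast
    moreover have "z = w + ((v - w) + n)" using n by (simp add: algebra_simps)
    ultimately show "z \<in> coset N w" unfolding coset_alt by blast
  next
    fix z assume "z \<in> coset N w"
    then obtain n where n: "n \<in> N" "z = w + n" unfolding coset_alt by blast
    then have "n - (v - w) \<in> N" using d Ndiff by blast
    moreover have "z = v + (n - (v - w))" using n by (simp add: algebra_simps)
    ultimately show "z \<in> coset N v" unfolding coset_alt by blast
  qed
qed

lemma coset0: "coset N 0 = N" by (force simp: coset_alt)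

lemma qadd_coset: "qadd (coset N v) (coset N w) = coset N (v + w)"
proof (rule set_eqI, rule iffI)
  fix z assume "z \<in> qadd (coset N v) (coset N w)"
  then obtain n m where nm: "n \<in> N" "m \<in> N" "z = (v + n) + (w + m)"
    unfolding qadd_def coset_alt vadd_eq by blast
  then have "n + m \<in> N" "z = (v + w) + (n + m)" using Nadd by (auto simp: algebra_simps)
  then show "z \<in> coset N (v + w)" unfolding coset_alt by blast
next
  fix z assume "z \<in> coset N (v + w)"
  then obtain n where n: "n \<in> N" "z = (v + w) + n" by (auto simp: coset_alt)
  have "v + n \<in> coset N v" "w + 0 \<in> coset N w" using n N0 unfolding coset_alt by blast+
  moreover have "z = (v + n) + (w + 0)" using n by (simp add: algebra_simps)
  ultimately show "z \<in> qadd (coset N v) (coset N w)" unfolding qadd_def vadd_eq by blast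
qed

lemma qsmul_coset: "qsmul N r (coset N v) = coset N (vsmul r v)"
proof (rule set_eqI, rule iffI)
  fix z assume "z \<in> qsmul N r (coset N v)"
  then obtain n m where nm: "n \<in> N" "m \<in> N" "z = vsmul r (v + n) + m"
    unfolding qsmul_def coset_alt vadd_eq by blast
  then have "vsmul r n + m \<in> N" "z = vsmul r v + (vsmul r n + m)"
    using Nadd Nsmul by (auto simp: vsmul_add2 algebra_simps)
  then show "z \<in> coset N (vsmul r v)" unfolding coset_alt by blast
next
  fix z assume "z \<in> coset N (vsmul r v)"
  then obtain n where n: "n \<in> N" "z = vsmul r v + n" by (auto simp: coset_alt)
  have "v + 0 \<in> coset N v" using N0 unfolding coset_alt by blast
  then have "v \<in> coset N v" by simp
  then show "z \<in> qsmul N r (coset N v)" using n unfolding qsmul_def vadd_eq by blast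
qed

lemma carrier_iff: "q \<in> qcarrier N \<longleftrightarrow> (\<exists>v. q = coset N v)"
  by (auto simp: qcarrier_def)

lemma coset_in[simp]: "coset N v \<in> qcarrier N" by (auto simp: qcarrier_def)

lemma algebra_step:
  assumes h1: "(x * p, x * q) \<in> N" and h2: "(a * p + y * r, a * q + y * s) \<in> N"
  shows "\<exists>c. (p - c, q) \<in> N \<and> (r, s - c) \<in> N"
proof -
  obtain u v where e1: "x * p = x * u + a * v" and e2: "x * q = y * v" using h1 by (auto simp: memN)
  have "x * q = 0" using inter[of q v] e2 by simp
  then obtain q' where q': "q = y * q'" using annx by blast
  obtain u2 v2 where f1: "a * p + y * r = x * u2 + a * v2" and f2: "a * q + y * s = y * v2"
    using h2 by (auto simp: memN)
  have "y * (a * q' + s - v2) = 0" using f2 q' by (simp add: algebra_simps)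
  then obtain z where z: "a * q' + s - v2 = x * z" using anny by blast
  define c where "c = p - a * q'"
  have s_eq: "s = x * z + v2 - a * q'" using z by (simp add: algebra_simps)
  have p_eq: "a * p = x * u2 + a * v2 - y * r" using f1 by (simp add: algebra_simps)
  have ac: "a * (c - s) = x * (u2 - a * z) + y * (- r)"
  proof -
    have "a * (c - s) = a * p - a * v2 - a * (x * z)"
      by (simp add: c_def s_eq algebra_simps)
    also have "... = x * (u2 - a * z) + y * (- r)" by (simp add: p_eq algebra_simps)
    finally show ?thesis .
  qed
  then obtain \<alpha> \<beta> where ab: "c - s = x * \<alpha> + y * \<beta>" using wr by blast
  have yb: "y * \<beta> = c - s - x * \<alpha>" using ab by (simp add: algebra_simps)
  have g: "y * (r + a * \<beta>) = x * (u2 - a * z - a * \<alpha>)"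
  proof -
    have "y * (r + a * \<beta>) = y * r + a * (y * \<beta>)" by (simp add: algebra_simps)
    also have "... = y * r + a * (c - s) - a * (x * \<alpha>)" by (simp add: yb right_diff_distrib)
    also have "... = x * (u2 - a * z - a * \<alpha>)" unfolding ac by (simp add: algebra_simps)
    finally show ?thesis .
  qed
  then have "x * (u2 - a * z - a * \<alpha>) = 0" using inter[of "u2 - a * z - a * \<alpha>" "r + a * \<beta>"] by simp
  then have "y * (r + a * \<beta>) = 0" using g by simp
  then obtain \<rho> where rho: "r + a * \<beta> = x * \<rho>" using anny by blast
  define c' where "c' = c - x * \<alpha>"
  have "(p - c', q) = (x * \<alpha> + a * q', y * q')" unfolding c'_def c_def q' by simp
  moreover have "r = x * \<rho> + a * (- \<beta>)" using rho by (simp add: algebra_simps)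
  moreover have "s - c' = y * (- \<beta>)" using yb unfolding c'_def by (simp add: algebra_simps)
  ultimately show ?thesis unfolding memN by blast
qed


lemma char:
  assumes "\<phi> \<in> qEnd N"
  shows "\<exists>c. \<forall>v. \<phi> (coset N v) = coset N (vsmul c v)"
proof -
  have cl: "\<And>q. q \<in> qcarrier N \<Longrightarrow> \<phi> q \<in> qcarrier N"
    and ad: "\<And>P R. P \<in> qcarrier N \<Longrightarrow> R \<in> qcarrier N \<Longrightarrow> \<phi> (qadd P R) = qadd (\<phi> P) (\<phi> R)"
    and sm: "\<And>r P. P \<in> qcarrier N \<Longrightarrow> \<phi> (qsmul N r P) = qsmul N r (\<phi> P)"
    using assms unfolding qEnd_def by blast+
  obtain P where P: "\<phi> (coset N (1, 0)) = coset N P" using cl[OF coset_in] carrier_iff by blast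
  obtain R where R: "\<phi> (coset N (0, 1)) = coset N R" using cl[OF coset_in] carrier_iff by blast
  have lin: "\<phi> (coset N v) = coset N (vsmul (fst v) P + vsmul (snd v) R)" for v
  proof -
    have eq: "coset N v = qadd (qsmul N (fst v) (coset N (1, 0))) (qsmul N (snd v) (coset N (0, 1)))"
      by (cases v) (simp add: qsmul_coset qadd_coset vsmul_def)
    have "\<phi> (coset N v) = qadd (\<phi> (qsmul N (fst v) (coset N (1, 0)))) (\<phi> (qsmul N (snd v) (coset N (0, 1))))"
      unfolding eq by (rule ad) (simp_all add: qsmul_coset)
    also have "... = qadd (qsmul N (fst v) (coset N P)) (qsmul N (snd v) (coset N R))"
      by (simp add: sm P R)
    also have "... = coset N (vsmul (fst v) P + vsmul (snd v) R)"
      by (simp add: qsmul_coset qadd_coset)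
    finally show ?thesis .
  qed
  have wd: "vsmul (fst n) P + vsmul (snd n) R \<in> N" if n: "n \<in> N" for n
  proof -
    have "coset N n = coset N 0" using n by (simp add: coset_eq_iff)
    then have "\<phi> (coset N n) = \<phi> (coset N 0)" by simp
    then have "coset N (vsmul (fst n) P + vsmul (snd n) R) = coset N 0"
      using lin[of n] lin[of 0] by (simp add: vsmul_zero)
    then show ?thesis by (simp add: coset_eq_iff)
  qed
  have "(x, 0) \<in> N" unfolding memN by (intro exI[of _ 1] exI[of _ 0]) simp
  from wd[OF this] have h1: "(x * fst P, x * snd P) \<in> N" by (simp add: vsmul_def zero_prod_def)
  have "(a, y) \<in> N" unfolding memN by (intro exI[of _ 0] exI[of _ 1]) simp
  from wd[OF this] have h2: "(a * fst P + y * fst R, a * snd P + y * snd R) \<in> N" by (simp add: vsmul_def)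
  obtain c where c1: "(fst P - c, snd P) \<in> N" and c2: "(fst R, snd R - c) \<in> N"
    using algebra_step[OF h1 h2] by blast
  have "\<phi> (coset N v) = coset N (vsmul c v)" for v
  proof -
    have "vsmul (fst v) P + vsmul (snd v) R - vsmul c v
        = vsmul (fst v) (fst P - c, snd P) + vsmul (snd v) (fst R, snd R - c)"
      by (cases v) (simp add: vsmul_def algebra_simps)
    also have "... \<in> N" by (intro Nadd Nsmul c1 c2)
    finally show ?thesis by (simp add: lin coset_eq_iff)
  qed
  then show ?thesis by blast
qed

lemma faithful:
  assumes "\<And>v. coset N (vsmul c v) = coset N (vsmul d v)"
  shows "c = d"
proof -
  have "(c - d, 0) \<in> N" using assms[of "(1,0)"] by (simp add: coset_eq_iff vsmul_def)
  then obtain u w where e1: "c - d = x * u + a * w" and e2: "y * w = 0" unfolding memN by auto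
  obtain w' where w': "w = x * w'" using e2 anny by blast
  have "(0, c - d) \<in> N" using assms[of "(0,1)"] by (simp add: coset_eq_iff vsmul_def)
  then obtain u2 w2 where f2: "c - d = y * w2" unfolding memN by auto
  have "x * (u + a * w') = y * w2" using e1 w' f2 by (simp add: algebra_simps)
  then have "x * (u + a * w') = 0" by (rule inter)
  then have "c - d = 0" using e1 w' by (simp add: algebra_simps)
  then show ?thesis by simp
qed

definition psi where "psi \<phi> = (THE c. \<forall>v. \<phi> (coset N v) = coset N (vsmul c v))"

lemma psi_eq:
  assumes "\<And>v. \<phi> (coset N v) = coset N (vsmul c v)"
  shows "psi \<phi> = c"
  unfolding psi_def
proof (rule the_equality)
  show "\<forall>v. \<phi> (coset N v) = coset N (vsmul c v)" using assms by blast
  fix d assume "\<forall>v. \<phi> (coset N v) = coset N (vsmul d v)"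
  then have "\<And>v. coset N (vsmul d v) = coset N (vsmul c v)" using assms by metis
  then show "d = c" by (rule faithful)
qed

lemma psi_char:
  assumes "\<phi> \<in> qEnd N"
  shows "\<phi> (coset N v) = coset N (vsmul (psi \<phi>) v)"
proof -
  obtain c where c: "\<And>v. \<phi> (coset N v) = coset N (vsmul c v)" using char[OF assms] by blast
  then have "psi \<phi> = c" by (rule psi_eq)
  then show ?thesis using c by simp
qed

lemma qEnd_undef: "\<phi> \<in> qEnd N \<Longrightarrow> q \<notin> qcarrier N \<Longrightarrow> \<phi> q = undefined"
  unfolding qEnd_def by blast

lemma qEnd_ext:
  assumes "\<phi> \<in> qEnd N" "\<chi> \<in> qEnd N" "psi \<phi> = psi \<chi>"
  shows "\<phi> = \<chi>"
proof
  fix q show "\<phi> q = \<chi> q"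
  proof (cases "q \<in> qcarrier N")
    case True
    then obtain v where "q = coset N v" by (auto simp: carrier_iff)
    then show ?thesis using psi_char[OF assms(1)] psi_char[OF assms(2)] assms(3) by simp
  next
    case False then show ?thesis using qEnd_undef assms by metis
  qed
qed

definition mc where "mc c = (\<lambda>q. if q \<in> qcarrier N then qsmul N c q else undefined)"

lemma mc_in: "mc c \<in> qEnd N"
  unfolding qEnd_def mc_def
proof (intro CollectI conjI ballI allI impI)
  fix q assume "q \<in> qcarrier N"
  then obtain v where "q = coset N v" by (auto simp: carrier_iff)
  then show "(if q \<in> qcarrier N then qsmul N c q else undefined) \<in> qcarrier N"
    by (simp add: qsmul_coset)
next
  fix q assume "q \<notin> qcarrier N"
  then show "(if q \<in> qcarrier N then qsmul N c q else undefined) = undefined" by simp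
next
  fix P R assume "P \<in> qcarrier N" "R \<in> qcarrier N"
  then obtain v w where "P = coset N v" "R = coset N w" by (auto simp: carrier_iff)
  then show "(if qadd P R \<in> qcarrier N then qsmul N c (qadd P R) else undefined) =
     qadd (if P \<in> qcarrier N then qsmul N c P else undefined) (if R \<in> qcarrier N then qsmul N c R else undefined)"
    by (simp add: qsmul_coset qadd_coset vsmul_add2)
next
  fix r P assume "P \<in> qcarrier N"
  then obtain v where "P = coset N v" by (auto simp: carrier_iff)
  then show "(if qsmul N r P \<in> qcarrier N then qsmul N c (qsmul N r P) else undefined) =
     qsmul N r (if P \<in> qcarrier N then qsmul N c P else undefined)"
    by (simp add: qsmul_coset vsmul_assoc mult.commute)
qed

lemma psi_mc: "psi (mc c) = c"
  by (rule psi_eq) (simp add: mc_def qsmul_coset)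

lemma iso: "End_iso_base N"
  unfolding End_iso_base_def
proof (intro exI[of _ psi] conjI ballI allI)
  show "bij_betw psi (qEnd N) UNIV"
    unfolding bij_betw_def
  proof
    show "inj_on psi (qEnd N)" by (rule inj_onI) (rule qEnd_ext)
    show "psi ` qEnd N = UNIV"
    proof (rule set_eqI, rule iffI)
      fix c :: 'a show "c \<in> psi ` qEnd N" using mc_in psi_mc by (metis image_eqI)
    qed simp
  qed
next
  fix \<phi> \<chi> assume p: "\<phi> \<in> qEnd N" and c: "\<chi> \<in> qEnd N"
  show "psi (ecomp N \<phi> \<chi>) = psi \<phi> * psi \<chi>"
    by (rule psi_eq) (simp add: ecomp_def psi_char[OF p] psi_char[OF c] vsmul_assoc)
  show "psi (eadd N \<phi> \<chi>) = psi \<phi> + psi \<chi>"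
    by (rule psi_eq) (simp add: eadd_def psi_char[OF p] psi_char[OF c] qadd_coset vsmul_add)
next
  show "psi (eid N) = 1" by (rule psi_eq) (simp add: eid_def vsmul_one)
next
  fix r \<phi> assume p: "\<phi> \<in> qEnd N"
  show "psi (esmul N r \<phi>) = r * psi \<phi>"
    by (rule psi_eq) (simp add: esmul_def psi_char[OF p] qsmul_coset vsmul_assoc)
qed

lemma comm:
  assumes "\<phi> \<in> qEnd N" "\<chi> \<in> qEnd N"
  shows "ecomp N \<phi> \<chi> = ecomp N \<chi> \<phi>"
proof
  fix q show "ecomp N \<phi> \<chi> q = ecomp N \<chi> \<phi> q"
  proof (cases "q \<in> qcarrier N")
    case True
    then obtain v where "q = coset N v" by (auto simp: carrier_iff)
    then show ?thesis
      by (simp add: ecomp_def psi_char[OF assms(1)] psi_char[OF assms(2)] vsmul_assoc mult.commute)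
  qed (simp add: ecomp_def)
qed


lemma vsmul_m1: "vsmul (-1) v = - v" by (cases v) (simp add: vsmul_def)

lemma N_in: "N \<in> qcarrier N" using coset_in[of 0] unfolding coset0 .

lemma qadd_N: "q \<in> qcarrier N \<Longrightarrow> qadd q N = q"
proof -
  assume "q \<in> qcarrier N"
  then obtain v where v: "q = coset N v" by (auto simp: carrier_iff)
  have "qadd (coset N v) (coset N 0) = coset N v" by (simp add: qadd_coset)
  then show ?thesis using v by (simp add: coset0)
qed

lemma qadd_N2: "q \<in> qcarrier N \<Longrightarrow> qadd N q = q"
proof -
  assume "q \<in> qcarrier N"
  then obtain v where v: "q = coset N v" by (auto simp: carrier_iff)
  have "qadd (coset N 0) (coset N v) = coset N v" by (simp add: qadd_coset)
  then show ?thesis using v by (simp add: coset0)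
qed

lemma qadd_in: "P \<in> qcarrier N \<Longrightarrow> R \<in> qcarrier N \<Longrightarrow> qadd P R \<in> qcarrier N"
  unfolding carrier_iff using qadd_coset by blast

lemma qsmul_in: "P \<in> qcarrier N \<Longrightarrow> qsmul N r P \<in> qcarrier N"
  unfolding carrier_iff using qsmul_coset by blast

lemma rearr:
  assumes "s1 \<in> qcarrier N" "t1 \<in> qcarrier N" "s2 \<in> qcarrier N" "t2 \<in> qcarrier N"
  shows "qadd (qadd s1 t1) (qadd s2 t2) = qadd (qadd s1 s2) (qadd t1 t2)"
proof -
  obtain a1 b1 a2 b2 where "s1 = coset N a1" "t1 = coset N b1" "s2 = coset N a2" "t2 = coset N b2"
    using assms by (auto simp: carrier_iff)
  then show ?thesis by (simp add: qadd_coset add_ac)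
qed

lemma smul_distr:
  assumes "s1 \<in> qcarrier N" "t1 \<in> qcarrier N"
  shows "qsmul N r (qadd s1 t1) = qadd (qsmul N r s1) (qsmul N r t1)"
proof -
  obtain a1 b1 where "s1 = coset N a1" "t1 = coset N b1"
    using assms by (auto simp: carrier_iff)
  then show ?thesis by (simp add: qadd_coset qsmul_coset vsmul_add2)
qed

lemma carrier_ne: "qcarrier N \<noteq> {N}"
proof
  assume h: "qcarrier N = {N}"
  have "coset N (1, 0) = coset N 0" using coset_in[of "(1,0)"] h by (simp add: coset0)
  then have "(1, 0) \<in> N" by (simp add: coset_eq_iff)
  then obtain u w where e1: "1 = x * u + a * w" and e2: "0 = y * w" unfolding memN by auto
  obtain w' where "w = x * w'" using e2 anny by metis
  then have "1 = x * (u + a * w')" using e1 by (simp add: algebra_simps)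
  then have "x dvd 1" by (metis dvdI)
  then show False using nux by simp
qed

lemma indec:
  assumes idem: "\<And>e::'a. e * e = e \<Longrightarrow> e = 0 \<or> e = 1"
  shows "indecomposable_quot N"
  unfolding indecomposable_quot_def
proof (intro conjI carrier_ne allI impI)
  fix S T assume hyp: "qsubmod N S \<and> qsubmod N T \<and> S \<inter> T = {N}
            \<and> (\<forall>q\<in>qcarrier N. \<exists>s\<in>S. \<exists>t\<in>T. q = qadd s t)"
  have qS: "qsubmod N S" using hyp by simp
  have Sc: "S \<subseteq> qcarrier N" using qS by (simp add: qsubmod_def)
  have NS: "N \<in> S" using qS by (simp add: qsubmod_def)
  have Sa: "\<And>P R. P \<in> S \<Longrightarrow> R \<in> S \<Longrightarrow> qadd P R \<in> S" using qS by (simp add: qsubmod_def)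
  have Ss: "\<And>r P. P \<in> S \<Longrightarrow> qsmul N r P \<in> S" using qS by (simp add: qsubmod_def)
  have qT: "qsubmod N T" using hyp by simp
  have Tc: "T \<subseteq> qcarrier N" using qT by (simp add: qsubmod_def)
  have NT: "N \<in> T" using qT by (simp add: qsubmod_def)
  have Ta: "\<And>P R. P \<in> T \<Longrightarrow> R \<in> T \<Longrightarrow> qadd P R \<in> T" using qT by (simp add: qsubmod_def)
  have Ts: "\<And>r P. P \<in> T \<Longrightarrow> qsmul N r P \<in> T" using qT by (simp add: qsubmod_def)
  have ST: "S \<inter> T = {N}" using hyp by simp
  have span: "\<And>q. q \<in> qcarrier N \<Longrightarrow> \<exists>s\<in>S. \<exists>t\<in>T. q = qadd s t"
    using hyp by simp
  have uniq: "s = s'" if s: "s \<in> S" "s' \<in> S" "t \<in> T" "t' \<in> T" "qadd s t = qadd s' t'" for s s' t t'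
  proof -
    obtain \<sigma> \<sigma>' \<tau> \<tau>' where c: "s = coset N \<sigma>" "s' = coset N \<sigma>'" "t = coset N \<tau>" "t' = coset N \<tau>'"
    proof -
      have "s \<in> qcarrier N" "s' \<in> qcarrier N" "t \<in> qcarrier N" "t' \<in> qcarrier N"
        using s Sc Tc by blast+
      then show ?thesis using that unfolding carrier_iff by blast
    qed
    have d: "(\<sigma> + \<tau>) - (\<sigma>' + \<tau>') \<in> N" using s(5) c by (simp add: qadd_coset coset_eq_iff)
    have "qadd s (qsmul N (-1) s') \<in> S" using s by (intro Sa Ss)
    then have inS: "coset N (\<sigma> - \<sigma>') \<in> S" using c by (simp add: qadd_coset qsmul_coset vsmul_m1)
    have "qadd t' (qsmul N (-1) t) \<in> T" using s by (intro Ta Ts)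
    then have "coset N (\<tau>' - \<tau>) \<in> T" using c by (simp add: qadd_coset qsmul_coset vsmul_m1)
    moreover have "coset N (\<sigma> - \<sigma>') = coset N (\<tau>' - \<tau>)"
      unfolding coset_eq_iff using d by (simp add: algebra_simps)
    ultimately have "coset N (\<sigma> - \<sigma>') \<in> S \<inter> T" using inS by simp
    then have "coset N (\<sigma> - \<sigma>') = coset N 0" using ST by (simp add: coset0)
    then have "\<sigma> - \<sigma>' \<in> N" by (simp add: coset_eq_iff)
    then show ?thesis using c by (simp add: coset_eq_iff)
  qed
  define pi where "pi = (\<lambda>q. if q \<in> qcarrier N then (THE s. s \<in> S \<and> (\<exists>t\<in>T. q = qadd s t)) else undefined)"
  have pi_eq: "pi (qadd s t) = s" if "s \<in> S" "t \<in> T" for s t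
  proof -
    have "qadd s t \<in> qcarrier N" using that Sc Tc by (intro qadd_in) auto
    moreover have "(THE s'. s' \<in> S \<and> (\<exists>t'\<in>T. qadd s t = qadd s' t')) = s"
    proof (rule the_equality)
      show "s \<in> S \<and> (\<exists>t'\<in>T. qadd s t = qadd s t')" using that by blast
    next
      fix s' assume "s' \<in> S \<and> (\<exists>t'\<in>T. qadd s t = qadd s' t')"
      then obtain t' where "s' \<in> S" "t' \<in> T" "qadd s' t' = qadd s t" by metis
      then show "s' = s" using uniq that by blast
    qed
    ultimately show ?thesis unfolding pi_def by simp
  qed
  have pi_in: "pi \<in> qEnd N"
    unfolding qEnd_def
  proof (intro CollectI conjI ballI allI impI)
    fix q assume "q \<in> qcarrier N"
    then obtain s t where "s \<in> S" "t \<in> T" "q = qadd s t" using span by blast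
    then show "pi q \<in> qcarrier N" using pi_eq Sc by auto
  next
    fix q assume "q \<notin> qcarrier N" then show "pi q = undefined" by (simp add: pi_def)
  next
    fix P R assume "P \<in> qcarrier N" "R \<in> qcarrier N"
    then obtain s1 t1 s2 t2 where h: "s1 \<in> S" "t1 \<in> T" "P = qadd s1 t1" "s2 \<in> S" "t2 \<in> T" "R = qadd s2 t2"
      using span by metis
    have mem: "s1 \<in> qcarrier N" "t1 \<in> qcarrier N" "s2 \<in> qcarrier N" "t2 \<in> qcarrier N"
      using h Sc Tc by blast+
    have "qadd P R = qadd (qadd s1 s2) (qadd t1 t2)" unfolding h(3) h(6) by (rule rearr[OF mem])
    then show "pi (qadd P R) = qadd (pi P) (pi R)" using h by (simp add: pi_eq Sa Ta)
  next
    fix r P assume "P \<in> qcarrier N"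
    then obtain s1 t1 where h: "s1 \<in> S" "t1 \<in> T" "P = qadd s1 t1" using span by metis
    have mem: "s1 \<in> qcarrier N" "t1 \<in> qcarrier N" using h Sc Tc by blast+
    have "qsmul N r P = qadd (qsmul N r s1) (qsmul N r t1)" unfolding h(3) by (rule smul_distr[OF mem])
    then show "pi (qsmul N r P) = qsmul N r (pi P)" using h by (simp add: pi_eq Ss Ts)
  qed
  define e where "e = psi pi"
  have pe: "pi (coset N v) = coset N (vsmul e v)" for v unfolding e_def by (rule psi_char[OF pi_in])
  have piS: "pi s = s" if "s \<in> S" for s
  proof -
    have "s \<in> qcarrier N" using that Sc by blast
    then show ?thesis using pi_eq[OF that NT] qadd_N[of s] by simp
  qed
  have piT: "pi t = N" if "t \<in> T" for t
  proof -
    have "t \<in> qcarrier N" using that Tc by blast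
    then show ?thesis using pi_eq[OF NS that] qadd_N2[of t] by simp
  qed
  have pipi: "pi (pi q) = pi q" if qc: "q \<in> qcarrier N" for q
  proof -
    obtain s t where "s \<in> S" "t \<in> T" "q = qadd s t" using span[OF qc] by blast
    then show ?thesis using pi_eq piS by simp
  qed
  have "coset N (vsmul e (vsmul e v)) = coset N (vsmul e v)" for v
  proof -
    have "coset N (vsmul e (vsmul e v)) = pi (pi (coset N v))" by (simp add: pe)
    also have "... = pi (coset N v)" by (rule pipi[OF coset_in])
    also have "... = coset N (vsmul e v)" by (rule pe)
    finally show ?thesis .
  qed
  then have "e * e = e" by (intro faithful) (simp add: vsmul_assoc)
  then have "e = 0 \<or> e = 1" by (rule idem)
  then show "S = {N} \<or> T = {N}"
  proof
    assume e0: "e = 0"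
    have "s = N" if "s \<in> S" for s
    proof -
      have "s \<in> qcarrier N" using that Sc by blast
      then obtain \<sigma> where "s = coset N \<sigma>" unfolding carrier_iff by blast
      then show ?thesis using piS[OF that] pe[of \<sigma>] e0 by (simp add: vsmul_zero coset0)
    qed
    then show ?thesis using NS by blast
  next
    assume e1: "e = 1"
    have "t = N" if "t \<in> T" for t
    proof -
      have "t \<in> qcarrier N" using that Tc by blast
      then obtain \<tau> where "t = coset N \<tau>" unfolding carrier_iff by blast
      then show ?thesis using piT[OF that] pe[of \<tau>] e1 by (simp add: vsmul_one)
    qed
    then show ?thesis using NT by blast
  qed
qed

end

lemma eta_gamma: "eta x y a = gamma y x (- a)"
  by (rule ext) (simp add: eta_def gamma_def)

lemma mk_gl:
  fixes x y a :: "'a::comm_ring_1"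
  assumes "regular_exact_pair x y" and "weakly_regular_quot a (ideal2 x y)"
  shows "gl x y a"
proof
  have ax: "ann x = pideal y" and ay: "ann y = pideal x" and nx: "\<not> x dvd 1"
    and i: "pideal x \<inter> pideal y = {0}"
    using assms(1) by (auto simp: regular_exact_pair_def exact_pair_def)
  fix z :: 'a
  have "x * z = 0 \<longleftrightarrow> z \<in> ann x" by (simp add: ann_def)
  also have "... \<longleftrightarrow> z \<in> pideal y" using ax by simp
  also have "... \<longleftrightarrow> (\<exists>r. z = y * r)" by (auto simp: pideal_def)
  finally show "x * z = 0 \<longleftrightarrow> (\<exists>r. z = y * r)" .
  have "y * z = 0 \<longleftrightarrow> z \<in> ann y" by (simp add: ann_def)
  also have "... \<longleftrightarrow> z \<in> pideal x" using ay by simp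
  also have "... \<longleftrightarrow> (\<exists>r. z = x * r)" by (auto simp: pideal_def)
  finally show "y * z = 0 \<longleftrightarrow> (\<exists>r. z = x * r)" .
next
  fix u v :: 'a assume e: "x * u = y * v"
  have "x * u \<in> pideal x" by (auto simp: pideal_def)
  moreover have "x * u \<in> pideal y" unfolding e by (auto simp: pideal_def)
  ultimately have "x * u \<in> pideal x \<inter> pideal y" by blast
  moreover have "pideal x \<inter> pideal y = {0}" using assms(1) unfolding regular_exact_pair_def by blast
  ultimately show "x * u = 0" by blast
next
  fix b s t :: 'a assume "a * b = x * s + y * t"
  then have "a * b \<in> ideal2 x y" by (auto simp: ideal2_def)
  then have "b \<in> ideal2 x y" using assms(2) by (simp add: weakly_regular_quot_def)
  then show "\<exists>\<alpha> \<beta>. b = x * \<alpha> + y * \<beta>" by (auto simp: ideal2_def)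
next
  show "\<not> x dvd 1" using assms(1) by (simp add: regular_exact_pair_def exact_pair_def)
qed

lemma rep_sym: "regular_exact_pair x y \<Longrightarrow> regular_exact_pair y x"
  by (auto simp: regular_exact_pair_def exact_pair_def)

lemma wr_sym:
  fixes x y a :: "'a::comm_ring_1"
  assumes "weakly_regular_quot a (ideal2 x y)"
  shows "weakly_regular_quot (- a) (ideal2 y x)"
  unfolding weakly_regular_quot_def
proof (intro allI impI)
  fix b assume "- a * b \<in> ideal2 y x"
  then obtain s t where "- a * b = y * s + x * t" by (auto simp: ideal2_def)
  then have "a * b = - (y * s + x * t)" by (metis minus_minus mult_minus_left)
  also have "... = x * (- t) + y * (- s)" by simp
  finally have "a * b \<in> ideal2 x y" unfolding ideal2_def by blast
  then have "b \<in> ideal2 x y" using assms by (simp add: weakly_regular_quot_def)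
  then obtain \<alpha> \<beta> where "b = x * \<alpha> + y * \<beta>" by (auto simp: ideal2_def)
  then have "b = y * \<beta> + x * \<alpha>" by (simp add: add.commute)
  then show "b \<in> ideal2 y x" by (auto simp: ideal2_def)
qed

theorem theorem4p5:
  fixes x y a :: "'a::comm_ring_1"
  assumes "noetherian_ring TYPE('a)"
    and "local_ring TYPE('a)"
    and "regular_exact_pair x y"
    and "weakly_regular_quot a (ideal2 x y)"
  shows "End_iso_base (range (gamma x y a)) \<and> End_iso_base (range (eta x y a))
    \<and> (\<forall>\<phi>\<in>qEnd (range (gamma x y a)). \<forall>\<chi>\<in>qEnd (range (gamma x y a)).
          ecomp (range (gamma x y a)) \<phi> \<chi> = ecomp (range (gamma x y a)) \<chi> \<phi>)
    \<and> (\<forall>\<phi>\<in>qEnd (range (eta x y a)). \<forall>\<chi>\<in>qEnd (range (eta x y a)).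
          ecomp (range (eta x y a)) \<phi> \<chi> = ecomp (range (eta x y a)) \<chi> \<phi>)
    \<and> indecomposable_quot (range (gamma x y a))
    \<and> indecomposable_quot (range (eta x y a))"
proof -
  have g1: "gl x y a" by (rule mk_gl[OF assms(3,4)])
  have g2: "gl y x (- a)" by (rule mk_gl[OF rep_sym[OF assms(3)] wr_sym[OF assms(4)]])
  have idem: "\<And>e::'a. e * e = e \<Longrightarrow> e = 0 \<or> e = 1" using local_idem[OF assms(2)] by blast
  have c1: "\<forall>\<phi>\<in>qEnd (range (gamma x y a)). \<forall>\<chi>\<in>qEnd (range (gamma x y a)).
          ecomp (range (gamma x y a)) \<phi> \<chi> = ecomp (range (gamma x y a)) \<chi> \<phi>"
    using gl.comm[OF g1] by blast
  have c2: "\<forall>\<phi>\<in>qEnd (range (gamma y x (- a))). \<forall>\<chi>\<in>qEnd (range (gamma y x (- a))).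
          ecomp (range (gamma y x (- a))) \<phi> \<chi> = ecomp (range (gamma y x (- a))) \<chi> \<phi>"
    using gl.comm[OF g2] by blast
  show ?thesis
    unfolding eta_gamma
    by (intro conjI c1 c2 gl.iso[OF g1] gl.iso[OF g2] gl.indec[OF g1 idem] gl.indec[OF g2 idem])
qed

end
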